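(* For $n\ge2$ and all $P,Q\in\Gamma_n$, $D_{TJ}(P\|Q)\le \frac23 D_{Th}(P\|Q)$.
   Context: $\Gamma_n=\{P=(p_1,\dots,p_n): p_i>0,\ \sum p_i=1\}$. $h(P\|Q)=\frac12\sum_{i=1}^n(\sqrt{p_i}-\sqrt{q_i})^2$; $J(P\|Q)=\sum_{i=1}^n(p_i-q_i)\ln\frac{p_i}{q_i}$; $T(P\|Q)=\sum_{i=1}^n\frac{p_i+q_i}{2}\ln\frac{p_i+q_i}{2\sqrt{p_iq_i}}$. $D_{TJ}=T-\frac18J$, $D_{Th}=T-h$. *)

theory Defs
  imports Complex_Main
begin

definition Gamma :: "nat \<Rightarrow> (nat \<Rightarrow> real) set" where
  "Gamma n = {p. (\<forall>i<n. p i > 0) \<and> (\<Sum>i<n. p i) = 1}"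

definition hell :: "nat \<Rightarrow> (nat \<Rightarrow> real) \<Rightarrow> (nat \<Rightarrow> real) \<Rightarrow> real" where
  "hell n p q = (1/2) * (\<Sum>i<n. (sqrt (p i) - sqrt (q i))^2)"

definition Jdiv :: "nat \<Rightarrow> (nat \<Rightarrow> real) \<Rightarrow> (nat \<Rightarrow> real) \<Rightarrow> real" where
  "Jdiv n p q = (\<Sum>i<n. (p i - q i) * ln (p i / q i))"

definition Tdiv :: "nat \<Rightarrow> (nat \<Rightarrow> real) \<Rightarrow> (nat \<Rightarrow> real) \<Rightarrow> real" where
  "Tdiv n p q = (\<Sum>i<n. (p i + q i) / 2 * ln ((p i + q i) / (2 * sqrt (p i * q i))))"

definition D_TJ :: "nat \<Rightarrow> (nat \<Rightarrow> real) \<Rightarrow> (nat \<Rightarrow> real) \<Rightarrow> real" where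
  "D_TJ n p q = Tdiv n p q - (1/8) * Jdiv n p q"

definition D_Th :: "nat \<Rightarrow> (nat \<Rightarrow> real) \<Rightarrow> (nat \<Rightarrow> real) \<Rightarrow> real" where
  "D_Th n p q = Tdiv n p q - hell n p q"

end

theory Submission imports Defs begin

definition KK :: "real \<Rightarrow> real" where
 "KK x = (x^2 - 1/x^2)/2 + 6 * ln x - 4*(x - 1/x)"

lemma KK_deriv: "x > 0 \<Longrightarrow> (KK has_real_derivative (x-1)^4/x^3) (at x)"
proof -
  assume x: "x > 0"
  have "(KK has_real_derivative (2*x - (-(2*x)/(x^2)^2))/2 + 6/x - 4*(1 + 1/x^2)) (at x)"
    unfolding KK_def using x
    by (auto intro!: derivative_eq_intros simp: power2_eq_square)
  moreover have "(2*x - (-(2*x)/(x^2)^2))/2 + 6/x - 4*(1 + 1/x^2) = (x-1)^4/x^3"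
    using x by (simp add: field_simps eval_nat_numeral)
  ultimately show ?thesis by simp
qed

lemma KK_ge: "x \<ge> 1 \<Longrightarrow> KK x \<ge> 0"
proof -
  assume x: "x \<ge> 1"
  have "KK 1 \<le> KK x"
    apply (rule DERIV_nonneg_imp_nondecreasing[OF x])
    subgoal for y using KK_deriv[of y] by (intro exI[of _ "(y-1)^4/y^3"]) auto
    done
  thus ?thesis by (simp add: KK_def)
qed

lemma KK_le: "0 < x \<Longrightarrow> x \<le> 1 \<Longrightarrow> KK x \<le> 0"
proof -
  assume x: "0 < x" "x \<le> 1"
  have "KK x \<le> KK 1"
    apply (rule DERIV_nonneg_imp_nondecreasing[OF x(2)])
    subgoal for y using KK_deriv[of y] x by (intro exI[of _ "(y-1)^4/y^3"]) auto
    done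
  thus ?thesis by (simp add: KK_def)
qed

definition FF :: "real \<Rightarrow> real" where
 "FF x = 6*(x^2-1)/(x^2+1)*ln x - 4*ln(x^2+1) + 4*ln x + 4*ln 2 - 8*(x-1)^2/(x^2+1)"

lemma FF_alt: "FF x = 6*(1 - 2/(x^2+1))*ln x - 4*ln(x^2+1) + 4*ln x + 4*ln 2 - 8 + 16*(x/(x^2+1))"
proof -
  have d: "x^2+1 \<noteq> (0::real)" by (smt (verit) zero_le_power2)
  have 1: "(x^2-1)/(x^2+1) = 1 - 2/(x^2+1)" using d by (simp add: field_simps)
  have 2: "(x-1)^2/(x^2+1) = 1 - 2*(x/(x^2+1))" using d by (simp add: field_simps power2_eq_square)
  show ?thesis unfolding FF_def 1 times_divide_eq_right[symmetric] 2 by (simp add: algebra_simps)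
qed

lemma FF_deriv_eq: "x > 0 \<Longrightarrow> 6*(-(-(2*(2*x))/(x^2+1)^2))*ln x + 6*(1 - 2/(x^2+1))*(1/x) - 4*(2*x/(x^2+1)) + 4/x
   + 16*((1*(x^2+1) - x*(2*x))/(x^2+1)^2) = 4*x*KK x/(x^2+1)^2"
proof -
  assume x: "x > 0"
  define d where "d = x^2+1"
  have d: "d > 0" unfolding d_def by (smt (verit) zero_le_power2)
  have a: "6*(-(-(2*(2*x))/d^2))*ln x = 24*x*ln x/d^2" by simp
  have b1: "6*(1 - 2/d)*(1/x) - 4*(2*x/d) + 4/x + 16*((1*d - x*(2*x))/d^2)
      = (10*d^2 - 12*d - 8*x^2*d + 16*x*(d - 2*x^2))/(x*d^2)"
    using x d by (simp add: field_simps power2_eq_square)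
  have b2: "10*d^2 - 12*d - 8*x^2*d + 16*x*(d - 2*x^2) = 2*x^4 - 2 - 16*x^3 + 16*x"
    unfolding d_def by (simp add: algebra_simps eval_nat_numeral)
  have c1: "4*x*((x^2 - 1/x^2)/2 - 4*(x - 1/x)) = (2*x^4 - 2 - 16*x^3 + 16*x)/x"
    using x by (simp add: field_simps eval_nat_numeral)
  have c: "4*x*KK x/d^2 = 24*x*ln x/d^2 + (2*x^4 - 2 - 16*x^3 + 16*x)/(x*d^2)"
  proof -
    have "4*x*KK x = 24*x*ln x + 4*x*((x^2 - 1/x^2)/2 - 4*(x - 1/x))"
      unfolding KK_def by (simp add: algebra_simps)
    hence "4*x*KK x/d^2 = 24*x*ln x/d^2 + 4*x*((x^2 - 1/x^2)/2 - 4*(x - 1/x))/d^2"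
      by (simp add: add_divide_distrib)
    thus ?thesis unfolding c1 by simp
  qed
  have b: "6*(1 - 2/d)*(1/x) - 4*(2*x/d) + 4/x + 16*((1*d - x*(2*x))/d^2)
      = (2*x^4 - 2 - 16*x^3 + 16*x)/(x*d^2)" using b1 b2 by simp
  show ?thesis unfolding d_def[symmetric] using a b c by linarith
qed

lemma FF_deriv: "x > 0 \<Longrightarrow> (FF has_real_derivative 4*x*KK x/(x^2+1)^2) (at x)"
proof -
  assume x: "x > 0"
  have d: "x^2+1 > 0" by (smt (verit) zero_le_power2)
  have e: "(16 * x\<^sup>2 + 16 - 32 * (x * x)) = 16 - 16 * x^2" by (simp add: power2_eq_square)
  have "((\<lambda>x. 6*(1 - 2/(x^2+1))*ln x - 4*ln(x^2+1) + 4*ln x + 4*ln 2 - 8 + 16*(x/(x^2+1))) has_real_derivative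
   6*(4*x/(x^2+1)^2)*ln x + 6*(1 - 2/(x^2+1))*(1/x) - 4*(2*x/(x^2+1)) + 4/x
   + 16*((1 - x^2)/(x^2+1)^2)) (at x)"
    using x d apply (auto intro!: derivative_eq_intros)
    apply (simp add: power2_eq_square[symmetric] e)
    done
  moreover have "6*(4*x/(x^2+1)^2)*ln x + 6*(1 - 2/(x^2+1))*(1/x) - 4*(2*x/(x^2+1)) + 4/x
   + 16*((1 - x^2)/(x^2+1)^2) = 6*(-(-(2*(2*x))/(x^2+1)^2))*ln x + 6*(1 - 2/(x^2+1))*(1/x) - 4*(2*x/(x^2+1)) + 4/x
   + 16*((1*(x^2+1) - x*(2*x))/(x^2+1)^2)"
    by (simp add: power2_eq_square)
  moreover note FF_deriv_eq[OF x]
  moreover have "FF = (\<lambda>x. 6*(1 - 2/(x^2+1))*ln x - 4*ln(x^2+1) + 4*ln x + 4*ln 2 - 8 + 16*(x/(x^2+1)))"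
    by (rule ext) (rule FF_alt)
  ultimately show ?thesis by metis
qed

lemma FF_nonneg: "x > 0 \<Longrightarrow> FF x \<ge> 0"
proof -
  assume x: "x > 0"
  have F1: "FF 1 = 0" by (simp add: FF_def)
  show ?thesis
  proof (cases "x \<ge> 1")
    case True
    have "FF 1 \<le> FF x"
      apply (rule DERIV_nonneg_imp_nondecreasing[OF True])
      subgoal for y using FF_deriv[of y] KK_ge[of y]
        by (intro exI[of _ "4*y*KK y/(y^2+1)^2"]) (auto intro!: divide_nonneg_pos mult_nonneg_nonneg)
      done
    thus ?thesis using F1 by simp
  next
    case False
    have "- FF x \<le> - FF 1"
      apply (rule DERIV_nonneg_imp_nondecreasing[of x 1 "\<lambda>y. - FF y"])
      using False apply simp
      subgoal for y
      proof -
        assume y: "x \<le> y" "y \<le> 1"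
        have yp: "y^2+1 > 0" by (smt (verit) zero_le_power2)
        have "KK y \<le> 0" using KK_le[of y] x y by simp
        hence "4*y*KK y/(y^2+1)^2 \<le> 0" using x y yp
          by (intro divide_nonpos_pos mult_nonneg_nonpos) auto
        moreover have "((\<lambda>y. - FF y) has_real_derivative - (4*y*KK y/(y^2+1)^2)) (at y)"
          using FF_deriv[of y] x y by (auto intro!: derivative_eq_intros)
        ultimately show ?thesis by (intro exI[of _ "- (4*y*KK y/(y^2+1)^2)"]) simp
      qed
      done
    thus ?thesis using F1 by simp
  qed
qed

lemma term_ineq:
  fixes a b :: real
  assumes a: "a > 0" and b: "b > 0"
  shows "4*(a^2+b^2) * ln ((a^2+b^2)/(2*(a*b))) + 8*(a-b)^2 \<le> 3*(a^2-b^2) * ln (a^2/b^2)"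
proof -
  define x where "x = a/b"
  have x: "x > 0" using a b by (simp add: x_def)
  have ax: "a = x*b" using b by (simp add: x_def)
  have F: "FF x \<ge> 0" using FF_nonneg x by simp
  have p: "x^2 + 1 > 0" by (smt (verit) zero_le_power2)
  have l1: "ln (a^2/b^2) = 2 * ln x" using x b by (simp add: ax power_mult_distrib ln_mult ln_div ln_realpow)
  have "(a^2+b^2)/(2*(a*b)) = (x^2+1)/(2*x)" using x b by (simp add: ax field_simps power2_eq_square)
  hence l2: "ln ((a^2+b^2)/(2*(a*b))) = ln (x^2+1) - ln 2 - ln x"
    using x p by (simp add: ln_div ln_mult)
  define d where "d = x^2+1"
  have d: "d \<noteq> 0" using p d_def by simp
  have "d * FF x = 6*(x^2-1)*ln x - 4*d*(ln d - ln 2 - ln x) - 8*(x-1)^2"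
    unfolding FF_def d_def[symmetric] using d by (simp add: algebra_simps diff_divide_distrib)
  hence "b^2 * (x^2+1) * FF x = b^2 * (6*(x^2-1)*ln x - 4*(x^2+1)*(ln (x^2+1) - ln 2 - ln x) - 8*(x-1)^2)"
    unfolding d_def by simp
  also have "\<dots> = 6*((x*b)^2-b^2)*ln x - 4*((x*b)^2+b^2)*(ln (x^2+1) - ln 2 - ln x) - 8*(x*b-b)^2"
    by (simp add: power_mult_distrib algebra_simps power2_eq_square)
  finally have e: "b^2 * (x^2+1) * FF x = 6*(a^2-b^2)*ln x - 4*(a^2+b^2)*(ln (x^2+1) - ln 2 - ln x) - 8*(a-b)^2"
    unfolding ax .
  have "0 \<le> b^2 * (x^2+1) * FF x" using F p by simp
  thus ?thesis unfolding l1 l2 using e by linarith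
qed

theorem proposition5p7:
  fixes n :: nat and P Q :: "nat \<Rightarrow> real"
  assumes "n \<ge> 2" and "P \<in> Gamma n" and "Q \<in> Gamma n"
  shows "D_TJ n P Q \<le> (2/3) * D_Th n P Q"
proof -
  have Pp: "\<And>i. i < n \<Longrightarrow> P i > 0" and Qp: "\<And>i. i < n \<Longrightarrow> Q i > 0"
    using assms(2,3) by (auto simp: Gamma_def)
  have t: "4*(P i + Q i) * ln ((P i + Q i)/(2*sqrt (P i * Q i))) + 8*(sqrt (P i) - sqrt (Q i))^2
      \<le> 3*(P i - Q i) * ln (P i / Q i)" if i: "i < n" for i
  proof -
    have a: "sqrt (P i) > 0" "sqrt (Q i) > 0" using Pp[OF i] Qp[OF i] by auto
    have "P i = (sqrt (P i))^2" "Q i = (sqrt (Q i))^2" using Pp[OF i] Qp[OF i] by auto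
    moreover have "sqrt (P i * Q i) = sqrt (P i) * sqrt (Q i)" by (simp add: real_sqrt_mult)
    ultimately show ?thesis using term_ineq[OF a] by metis
  qed
  have "(\<Sum>i<n. 4*(P i + Q i) * ln ((P i + Q i)/(2*sqrt (P i * Q i))) + 8*(sqrt (P i) - sqrt (Q i))^2)
      \<le> (\<Sum>i<n. 3*(P i - Q i) * ln (P i / Q i))"
    by (rule sum_mono) (use t in auto)
  moreover have "8 * Tdiv n P Q = (\<Sum>i<n. 4*(P i + Q i) * ln ((P i + Q i)/(2*sqrt (P i * Q i))))"
    unfolding Tdiv_def sum_distrib_left by (rule sum.cong) auto
  moreover have "16 * hell n P Q = (\<Sum>i<n. 8*(sqrt (P i) - sqrt (Q i))^2)"
    unfolding hell_def sum_distrib_left by simp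
  moreover have "3 * Jdiv n P Q = (\<Sum>i<n. 3*(P i - Q i) * ln (P i / Q i))"
    unfolding Jdiv_def sum_distrib_left by (rule sum.cong) auto
  ultimately have "8 * Tdiv n P Q + 16 * hell n P Q \<le> 3 * Jdiv n P Q"
    by (simp add: sum.distrib)
  thus ?thesis unfolding D_TJ_def D_Th_def by simp
qed

end
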